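(* Let $(X,d)$ be a compact doubling metric space with $\operatorname{diam}(X,d)=1/2$ and let $(\mathcal S,D_2)$ be a hyperbolic filling with parameters $a\ge\lambda\ge6$. If a function $\rho:\mathcal S\to(0,\infty)$ satisfies (H1), (H2) and (H3'), then $\rho$ also satisfies (H3).
   Context: Hyperbolic filling: $X_0\subset X_1\subset\cdots$ increasing, $X_n$ maximal $a^{-n}$-separated in $X$ ($X_0=\{x_0\}$); $\mathcal S_n=\{(x,n):x\in X_n\}$, $\mathcal S=\bigcup_n\mathcal S_n$, $\pi_1(x,n)=x$, $\pi_2(x,n)=n$, $v_0=(x_0,0)$, $B_v=B(\pi_1(v),a^{-\pi_2(v)})$. Each $(x,n)$, $n\ge1$, has a fixed parent $(y,n-1)$ with $d(x,y)=\min_{z\in X_{n-1}}d(x,z)$; genealogy $g(v)=(v_0,\dots,v_k=v)$ with $v_i$ the parent of $v_{i+1}$. Graph $(\mathcal S,D_2)$: edges vertex–parent, and horizontal edges between distinct $(x,n),(y,n)$ with $B(x,\lambda a^{-n})\cap B(y,\lambda a^{-n})\ne\emptyset$; $D_2$ is graph distance. Paths: finite vertex sequences with consecutive ones adjacent; horizontal paths use only horizontal edges. $\pi(v)=\prod_{w\in g(v)}\rho(w)$, $L_\rho(\gamma)=\sum_{v\in\gamma}\pi(v)$. For distinct $x,y$: $\tilde n$ largest integer with $\{x,y\}\subset B(\tilde z,2a^{-\tilde n})$ for some $(\tilde z,\tilde n)\in\mathcal S$; $c(x,y)$ the set of such $(\tilde z,\tilde n)$; $\pi(c(x,y))=\max_{c(x,y)}\pi$.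 $\Gamma_n(x,y)$: paths $(v_1,\dots,v_k)$ with $\pi_2(v_1)=\pi_2(v_k)=n$, $x\in B_{v_1}$, $y\in B_{v_k}$. For $v\in\mathcal S_k$, $\Gamma_k(v)$: horizontal paths $(v_1,\dots,v_n)$ in $\mathcal S_{k+1}$ with $\pi_1(v_1)\in B_v$, $\pi_1(v_n)\notin B(\pi_1(v),2a^{-k})$. $\rho^*(v)=\min\{\rho(w):\pi_2(w)=\pi_2(v),D_2(v,w)\le1\}$; for a horizontal path $\gamma=(v_1,\dots,v_N)$, $L_h(\gamma,\rho)=\sum_{j=1}^{N-1}\rho^*(v_j)\wedge\rho^*(v_{j+1})$. (H1) $0<\eta_-\le\rho\le\eta_+<1$. (H2) $\pi(v)\le K_0\pi(w)$ for horizontally adjacent $v,w$, some $K_0\ge1$. (H3) there is $K_1\ge1$ such that for distinct $x,y$ there is $n_0$ with $L_\rho(\gamma)\ge K_1^{-1}\pi(c(x,y))$ for all $n\ge n_0$, $\gamma\in\Gamma_n(x,y)$. (H3') for all $k\ge0$, $v\in\mathcal S_k$ and $\gamma\in\Gamma_k(v)$, $L_h(\gamma,\rho)\ge1$. *)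

theory Defs
  imports "HOL-Analysis.Analysis"
begin

definition Bx :: "'a::metric_space set \<Rightarrow> 'a \<Rightarrow> real \<Rightarrow> 'a set" where
  "Bx X x r = ball x r \<inter> X"

definition doubling :: "'a::metric_space set \<Rightarrow> bool" where
  "doubling X \<longleftrightarrow> (\<exists>N::nat. \<forall>x\<in>X. \<forall>r>0. \<exists>F. F \<subseteq> X \<and> finite F \<and> card F \<le> N \<and>
      Bx X x r \<subseteq> (\<Union>y\<in>F. Bx X y (r/2)))"

definition separated :: "'a::metric_space set \<Rightarrow> real \<Rightarrow> bool" where
  "separated A e \<longleftrightarrow> (\<forall>x\<in>A. \<forall>y\<in>A. x \<noteq> y \<longrightarrow> dist x y \<ge> e)"

definition maximal_separated :: "'a::metric_space set \<Rightarrow> 'a set \<Rightarrow> real \<Rightarrow> bool" where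
  "maximal_separated X A e \<longleftrightarrow> A \<subseteq> X \<and> separated A e \<and>
     (\<forall>B. A \<subseteq> B \<and> B \<subseteq> X \<and> separated B e \<longrightarrow> B = A)"

definition verts :: "(nat \<Rightarrow> 'a set) \<Rightarrow> ('a \<times> nat) set" where
  "verts Xs = {(x, n). x \<in> Xs n}"

definition hyperbolic_filling ::
  "'a::metric_space set \<Rightarrow> real \<Rightarrow> 'a \<Rightarrow> (nat \<Rightarrow> 'a set) \<Rightarrow> ('a \<times> nat \<Rightarrow> 'a \<times> nat) \<Rightarrow> bool" where
  "hyperbolic_filling X a x0 Xs par \<longleftrightarrow>
     x0 \<in> X \<and> Xs 0 = {x0} \<and> (\<forall>n. Xs n \<subseteq> Xs (Suc n)) \<and>
     (\<forall>n. maximal_separated X (Xs n) (a powr (- real n))) \<and>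
     (\<forall>x n. x \<in> Xs n \<and> n \<ge> 1 \<longrightarrow>
        (\<exists>y. par (x, n) = (y, n - 1) \<and> y \<in> Xs (n - 1) \<and>
             (\<forall>z\<in>Xs (n - 1). dist x y \<le> dist x z)))"

definition hadj ::
  "'a::metric_space set \<Rightarrow> real \<Rightarrow> real \<Rightarrow> (nat \<Rightarrow> 'a set) \<Rightarrow> 'a \<times> nat \<Rightarrow> 'a \<times> nat \<Rightarrow> bool" where
  "hadj X a lam Xs v w \<longleftrightarrow> v \<in> verts Xs \<and> w \<in> verts Xs \<and> snd v = snd w \<and> v \<noteq> w \<and>
     Bx X (fst v) (lam * a powr (- real (snd v))) \<inter> Bx X (fst w) (lam * a powr (- real (snd w))) \<noteq> {}"

definition adj ::
  "'a::metric_space set \<Rightarrow> real \<Rightarrow> real \<Rightarrow> (nat \<Rightarrow> 'a set) \<Rightarrow> ('a \<times> nat \<Rightarrow> 'a \<times> nat)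
     \<Rightarrow> 'a \<times> nat \<Rightarrow> 'a \<times> nat \<Rightarrow> bool" where
  "adj X a lam Xs par v w \<longleftrightarrow> v \<in> verts Xs \<and> w \<in> verts Xs \<and>
     ((snd v \<ge> 1 \<and> w = par v) \<or> (snd w \<ge> 1 \<and> v = par w) \<or> hadj X a lam Xs v w)"

definition is_path ::
  "'a::metric_space set \<Rightarrow> real \<Rightarrow> real \<Rightarrow> (nat \<Rightarrow> 'a set) \<Rightarrow> ('a \<times> nat \<Rightarrow> 'a \<times> nat)
     \<Rightarrow> ('a \<times> nat) list \<Rightarrow> bool" where
  "is_path X a lam Xs par \<gamma> \<longleftrightarrow> \<gamma> \<noteq> [] \<and> set \<gamma> \<subseteq> verts Xs \<and>
     successively (adj X a lam Xs par) \<gamma>"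

definition is_hpath ::
  "'a::metric_space set \<Rightarrow> real \<Rightarrow> real \<Rightarrow> (nat \<Rightarrow> 'a set) \<Rightarrow> ('a \<times> nat) list \<Rightarrow> bool" where
  "is_hpath X a lam Xs \<gamma> \<longleftrightarrow> \<gamma> \<noteq> [] \<and> set \<gamma> \<subseteq> verts Xs \<and>
     successively (hadj X a lam Xs) \<gamma>"

fun genl :: "('b \<Rightarrow> 'b) \<Rightarrow> nat \<Rightarrow> 'b \<Rightarrow> 'b list" where
  "genl par 0 v = [v]"
| "genl par (Suc k) v = genl par k (par v) @ [v]"

definition genealogy :: "('a \<times> nat \<Rightarrow> 'a \<times> nat) \<Rightarrow> 'a \<times> nat \<Rightarrow> ('a \<times> nat) list" where
  "genealogy par v = genl par (snd v) v"

definition piw :: "('a \<times> nat \<Rightarrow> 'a \<times> nat) \<Rightarrow> ('a \<times> nat \<Rightarrow> real) \<Rightarrow> 'a \<times> nat \<Rightarrow> real" where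
  "piw par \<rho> v = prod_list (map \<rho> (genealogy par v))"

definition L_rho :: "('a \<times> nat \<Rightarrow> 'a \<times> nat) \<Rightarrow> ('a \<times> nat \<Rightarrow> real) \<Rightarrow> ('a \<times> nat) list \<Rightarrow> real" where
  "L_rho par \<rho> \<gamma> = (\<Sum>v\<in>set \<gamma>. piw par \<rho> v)"

definition ntilde :: "real \<Rightarrow> (nat \<Rightarrow> 'a::metric_space set) \<Rightarrow> 'a \<Rightarrow> 'a \<Rightarrow> nat" where
  "ntilde a Xs x y = (GREATEST n. \<exists>z\<in>Xs n. x \<in> ball z (2 * a powr (- real n)) \<and>
                                         y \<in> ball z (2 * a powr (- real n)))"

definition cxy :: "'a::metric_space set \<Rightarrow> real \<Rightarrow> (nat \<Rightarrow> 'a set) \<Rightarrow> 'a \<Rightarrow> 'a \<Rightarrow> ('a \<times> nat) set" where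
  "cxy X a Xs x y = (let n = ntilde a Xs x y in
     {(z, n) | z. z \<in> Xs n \<and> {x, y} \<subseteq> Bx X z (2 * a powr (- real n))})"

definition pi_c :: "'a::metric_space set \<Rightarrow> real \<Rightarrow> (nat \<Rightarrow> 'a set) \<Rightarrow> ('a \<times> nat \<Rightarrow> 'a \<times> nat)
    \<Rightarrow> ('a \<times> nat \<Rightarrow> real) \<Rightarrow> 'a \<Rightarrow> 'a \<Rightarrow> real" where
  "pi_c X a Xs par \<rho> x y = Max (piw par \<rho> ` cxy X a Xs x y)"

definition Gamma_xy ::
  "'a::metric_space set \<Rightarrow> real \<Rightarrow> real \<Rightarrow> (nat \<Rightarrow> 'a set) \<Rightarrow> ('a \<times> nat \<Rightarrow> 'a \<times> nat)
     \<Rightarrow> nat \<Rightarrow> 'a \<Rightarrow> 'a \<Rightarrow> ('a \<times> nat) list set" where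
  "Gamma_xy X a lam Xs par n x y = {\<gamma>. is_path X a lam Xs par \<gamma> \<and>
     snd (hd \<gamma>) = n \<and> snd (last \<gamma>) = n \<and>
     x \<in> Bx X (fst (hd \<gamma>)) (a powr (- real n)) \<and> y \<in> Bx X (fst (last \<gamma>)) (a powr (- real n))}"

definition Gamma_v ::
  "'a::metric_space set \<Rightarrow> real \<Rightarrow> real \<Rightarrow> (nat \<Rightarrow> 'a set) \<Rightarrow> 'a \<times> nat \<Rightarrow> ('a \<times> nat) list set" where
  "Gamma_v X a lam Xs v = {\<gamma>. is_hpath X a lam Xs \<gamma> \<and> (\<forall>w\<in>set \<gamma>. snd w = Suc (snd v)) \<and>
     fst (hd \<gamma>) \<in> Bx X (fst v) (a powr (- real (snd v))) \<and>
     fst (last \<gamma>) \<notin> Bx X (fst v) (2 * a powr (- real (snd v)))}"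

text \<open>rho^*(v) = min{rho(w) : pi_2(w) = pi_2(v), D_2(v,w) \<le> 1}; D_2(v,w) \<le> 1 means w = v or w adjacent to v.\<close>
definition rho_star ::
  "'a::metric_space set \<Rightarrow> real \<Rightarrow> real \<Rightarrow> (nat \<Rightarrow> 'a set) \<Rightarrow> ('a \<times> nat \<Rightarrow> 'a \<times> nat)
     \<Rightarrow> ('a \<times> nat \<Rightarrow> real) \<Rightarrow> 'a \<times> nat \<Rightarrow> real" where
  "rho_star X a lam Xs par \<rho> v =
     Min (\<rho> ` {w \<in> verts Xs. snd w = snd v \<and> (w = v \<or> adj X a lam Xs par v w)})"

definition L_h ::
  "'a::metric_space set \<Rightarrow> real \<Rightarrow> real \<Rightarrow> (nat \<Rightarrow> 'a set) \<Rightarrow> ('a \<times> nat \<Rightarrow> 'a \<times> nat)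
     \<Rightarrow> ('a \<times> nat) list \<Rightarrow> ('a \<times> nat \<Rightarrow> real) \<Rightarrow> real" where
  "L_h X a lam Xs par \<gamma> \<rho> = (\<Sum>j<length \<gamma> - 1.
      min (rho_star X a lam Xs par \<rho> (\<gamma> ! j)) (rho_star X a lam Xs par \<rho> (\<gamma> ! Suc j)))"

definition H1 :: "(nat \<Rightarrow> 'a set) \<Rightarrow> ('a \<times> nat \<Rightarrow> real) \<Rightarrow> bool" where
  "H1 Xs \<rho> \<longleftrightarrow> (\<exists>eta_m eta_p. 0 < eta_m \<and> eta_m \<le> eta_p \<and> eta_p < 1 \<and>
      (\<forall>v\<in>verts Xs. eta_m \<le> \<rho> v \<and> \<rho> v \<le> eta_p))"

definition H2 :: "'a::metric_space set \<Rightarrow> real \<Rightarrow> real \<Rightarrow> (nat \<Rightarrow> 'a set) \<Rightarrow> ('a \<times> nat \<Rightarrow> 'a \<times> nat)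
    \<Rightarrow> ('a \<times> nat \<Rightarrow> real) \<Rightarrow> bool" where
  "H2 X a lam Xs par \<rho> \<longleftrightarrow> (\<exists>K0\<ge>1. \<forall>v w. hadj X a lam Xs v w \<longrightarrow> piw par \<rho> v \<le> K0 * piw par \<rho> w)"

definition H3 :: "'a::metric_space set \<Rightarrow> real \<Rightarrow> real \<Rightarrow> (nat \<Rightarrow> 'a set) \<Rightarrow> ('a \<times> nat \<Rightarrow> 'a \<times> nat)
    \<Rightarrow> ('a \<times> nat \<Rightarrow> real) \<Rightarrow> bool" where
  "H3 X a lam Xs par \<rho> \<longleftrightarrow> (\<exists>K1\<ge>1. \<forall>x\<in>X. \<forall>y\<in>X. x \<noteq> y \<longrightarrow>
     (\<exists>n0. \<forall>n\<ge>n0. \<forall>\<gamma>\<in>Gamma_xy X a lam Xs par n x y.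
        L_rho par \<rho> \<gamma> \<ge> pi_c X a Xs par \<rho> x y / K1))"

definition H3' :: "'a::metric_space set \<Rightarrow> real \<Rightarrow> real \<Rightarrow> (nat \<Rightarrow> 'a set) \<Rightarrow> ('a \<times> nat \<Rightarrow> 'a \<times> nat)
    \<Rightarrow> ('a \<times> nat \<Rightarrow> real) \<Rightarrow> bool" where
  "H3' X a lam Xs par \<rho> \<longleftrightarrow> (\<forall>v\<in>verts Xs. \<forall>\<gamma>\<in>Gamma_v X a lam Xs v. L_h X a lam Xs par \<gamma> \<rho> \<ge> 1)"

end

theory Submission
  imports Defs
begin

fun Wsum :: "('b \<Rightarrow> bool) \<Rightarrow> ('b \<Rightarrow> real) \<Rightarrow> 'b list \<Rightarrow> real" where
  "Wsum P f (x # y # zs) = (if P x then min (f x) (f y) else 0) + Wsum P f (y # zs)"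
| "Wsum P f _ = 0"

lemma Wsum_nonneg: "\<forall>x\<in>set xs. f x \<ge> 0 \<Longrightarrow> Wsum P f xs \<ge> 0"
  by (induction P f xs rule: Wsum.induct) auto

lemma loop_free: "xs \<noteq> [] \<Longrightarrow> successively R xs \<Longrightarrow> \<exists>ys. ys \<noteq> [] \<and> distinct ys \<and> successively R ys \<and>
   hd ys = hd xs \<and> last ys = last xs \<and> set ys \<subseteq> set xs"
proof (induction "length xs" arbitrary: xs rule: less_induct)
  case less
  show ?case
  proof (cases "distinct xs")
    case True then show ?thesis using less.prems by blast
  next
    case False
    then obtain as bs cs v where xs: "xs = as @ [v] @ bs @ [v] @ cs" using not_distinct_decomp by blast
    define zs where "zs = as @ [v] @ cs"
    have e1: "successively R ((as @ [v]) @ (bs @ v # cs))" using less.prems(2) xs by simp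
    have e2: "successively R ((as @ v # bs) @ (v # cs))" using less.prems(2) xs by simp
    have s1: "successively R (as @ [v])" "successively R (v # cs)"
      using e1 e2 unfolding successively_append_iff by blast+
    have "successively R ((as @ [v]) @ cs)" using s1 unfolding successively_append_iff successively_Cons[of R v cs]
      by auto
    then have "successively R zs" unfolding zs_def by simp
    moreover have "length zs < length xs" unfolding zs_def xs by simp
    moreover have "zs \<noteq> []" unfolding zs_def by simp
    ultimately obtain ys where ys: "ys \<noteq> []" "distinct ys" "successively R ys" "hd ys = hd zs"
      "last ys = last zs" "set ys \<subseteq> set zs" using less.hyps by blast
    have "hd zs = hd xs" unfolding zs_def xs by (simp add: hd_append)
    moreover have "last zs = last xs" unfolding zs_def xs by (cases cs) simp_all
    moreover have "set zs \<subseteq> set xs" unfolding zs_def xs by auto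
    ultimately show ?thesis using ys by auto
  qed
qed

locale HF =
  fixes X :: "'a::metric_space set" and a lam :: real and x0 :: 'a
    and Xs :: "nat \<Rightarrow> 'a set" and par :: "'a \<times> nat \<Rightarrow> 'a \<times> nat"
    and \<rho> :: "'a \<times> nat \<Rightarrow> real" and eta_m K0 :: real
  assumes cpt: "compact X" and a_ge: "a \<ge> lam" and lam_ge: "lam \<ge> 6"
    and hf: "hyperbolic_filling X a x0 Xs par"
    and rho_pos: "\<forall>v\<in>verts Xs. \<rho> v > 0"
    and eta_pos: "0 < eta_m" and eta_lt: "eta_m < 1" and eta_le: "\<forall>v\<in>verts Xs. eta_m \<le> \<rho> v"
    and K0_ge: "K0 \<ge> 1"
    and K0: "\<And>v w. hadj X a lam Xs v w \<Longrightarrow> piw par \<rho> v \<le> K0 * piw par \<rho> w"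
    and H3'': "H3' X a lam Xs par \<rho>"
begin

definition r :: "nat \<Rightarrow> real" where "r n = a powr (- real n)"

lemma a_ge6: "a \<ge> 6" using a_ge lam_ge by linarith

lemma r_pos: "r n > 0" unfolding r_def using a_ge6 by simp

lemma r_Suc: "r (Suc n) = r n / a"
  unfolding r_def using a_ge6 by (simp add: powr_diff powr_minus divide_simps powr_add)

lemma r_Suc_mul: "r n = a * r (Suc n)"
  using r_Suc[of n] a_ge6 by simp

lemma r_Suc_lam: "lam * r (Suc n) \<le> r n"
  using r_Suc_mul[of n] mult_right_mono[OF a_ge, of "r (Suc n)"] r_pos[of "Suc n"] by simp

lemma r_Suc_6: "6 * r (Suc n) \<le> r n"
proof -
  have "6 * r (Suc n) \<le> lam * r (Suc n)" using lam_ge r_pos[of "Suc n"] by (intro mult_right_mono) auto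
  then show ?thesis using r_Suc_lam[of n] by linarith
qed

lemma r_mono: "m \<le> n \<Longrightarrow> r n \<le> r m"
  unfolding r_def using a_ge6 by (intro powr_mono) auto

lemma r_0: "r 0 = 1" unfolding r_def using a_ge6 by simp


abbreviation V where "V \<equiv> verts Xs"

lemma verts_iff: "w \<in> verts Xs \<longleftrightarrow> fst w \<in> Xs (snd w)"
  unfolding verts_def by (cases w) auto

lemma hf_parts: "x0 \<in> X" "Xs 0 = {x0}" "\<And>n. maximal_separated X (Xs n) (r n)"
  "\<And>x n. x \<in> Xs n \<Longrightarrow> n \<ge> 1 \<Longrightarrow> (\<exists>y. par (x, n) = (y, n - 1) \<and> y \<in> Xs (n - 1) \<and>
             (\<forall>z\<in>Xs (n - 1). dist x y \<le> dist x z))"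
  using hf unfolding hyperbolic_filling_def r_def by auto

lemma Xs_sub: "Xs n \<subseteq> X"
  using hf_parts(3)[of n] unfolding maximal_separated_def by auto

lemma Xs_sep: "x \<in> Xs n \<Longrightarrow> y \<in> Xs n \<Longrightarrow> x \<noteq> y \<Longrightarrow> dist x y \<ge> r n"
  using hf_parts(3)[of n] unfolding maximal_separated_def separated_def by auto

lemma net: assumes "x \<in> X" shows "\<exists>z\<in>Xs n. dist x z < r n"
proof (rule ccontr)
  assume c: "\<not> ?thesis"
  have "x \<notin> Xs n" using c r_pos[of n] by force
  have "separated (insert x (Xs n)) (r n)"
    using c Xs_sep unfolding separated_def by (auto simp: dist_commute not_less)
  moreover have "Xs n \<subseteq> insert x (Xs n)" "insert x (Xs n) \<subseteq> X" using assms Xs_sub by auto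
  ultimately have "insert x (Xs n) = Xs n"
    using hf_parts(3)[of n] unfolding maximal_separated_def by blast
  then show False using \<open>x \<notin> Xs n\<close> by auto
qed

lemma finite_Xs: "finite (Xs n)"
proof -
  have tb: "\<forall>e>0. \<exists>k. finite k \<and> k \<subseteq> X \<and> X \<subseteq> (\<Union>x\<in>k. ball x e)"
    using seq_compact_imp_totally_bounded compact_imp_seq_compact cpt by blast
  obtain k where k: "finite k" "X \<subseteq> (\<Union>x\<in>k. ball x (r n / 2))"
    using tb r_pos[of n] by (meson half_gt_zero)
  define f where "f y = (SOME c. c \<in> k \<and> y \<in> ball c (r n / 2))" for y
  have f: "f y \<in> k \<and> y \<in> ball (f y) (r n / 2)" if "y \<in> Xs n" for y
  proof -
    have "\<exists>c. c \<in> k \<and> y \<in> ball c (r n / 2)" using k(2) Xs_sub that by blast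
    then show ?thesis unfolding f_def by (rule someI_ex)
  qed
  have "inj_on f (Xs n)"
  proof (rule inj_onI)
    fix y1 y2 assume y: "y1 \<in> Xs n" "y2 \<in> Xs n" "f y1 = f y2"
    then have "dist y1 y2 < r n" using f[OF y(1)] f[OF y(2)]
      by (simp add: dist_commute) (smt (verit) dist_triangle2)
    then show "y1 = y2" using Xs_sep[OF y(1,2)] by fastforce
  qed
  moreover have "f ` Xs n \<subseteq> k" using f by auto
  ultimately show ?thesis using k(1) inj_on_finite by blast
qed

lemma fst_in_X: "w \<in> V \<Longrightarrow> fst w \<in> X"
  using Xs_sub verts_iff by blast

lemma par_props: assumes "w \<in> V" "snd w \<ge> 1"
  shows "par w \<in> V" "snd (par w) = snd w - 1" "dist (fst w) (fst (par w)) < r (snd w - 1)"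
proof -
  obtain x n where w: "w = (x, n)" by (cases w)
  have x: "x \<in> Xs n" "n \<ge> 1" using assms w verts_iff by auto
  obtain y where y: "par (x, n) = (y, n - 1)" "y \<in> Xs (n - 1)" "\<forall>z\<in>Xs (n - 1). dist x y \<le> dist x z"
    using hf_parts(4)[OF x] by blast
  obtain z where z: "z \<in> Xs (n - 1)" "dist x z < r (n - 1)" using net[of x "n - 1"] x Xs_sub by blast
  show "par w \<in> V" "snd (par w) = snd w - 1" using y w verts_iff by auto
  show "dist (fst w) (fst (par w)) < r (snd w - 1)" using y z w by force
qed

lemma hadj_unfold: "hadj X a lam Xs v w \<longleftrightarrow> v \<in> V \<and> w \<in> V \<and> snd v = snd w \<and> v \<noteq> w \<and>
   (\<exists>z\<in>X. dist (fst v) z < lam * r (snd v) \<and> dist (fst w) z < lam * r (snd v))"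
  unfolding hadj_def Bx_def r_def[symmetric] by auto

lemma hadj_dist: "hadj X a lam Xs v w \<Longrightarrow> dist (fst v) (fst w) < 2 * lam * r (snd v)"
proof -
  assume "hadj X a lam Xs v w"
  then obtain z where "dist (fst v) z < lam * r (snd v)" "dist (fst w) z < lam * r (snd v)"
    unfolding hadj_unfold by auto
  moreover have "dist (fst v) (fst w) \<le> dist (fst v) z + dist (fst w) z" by (rule dist_triangle2)
  ultimately show ?thesis by linarith
qed

lemma hadj_intro: "v \<in> V \<Longrightarrow> w \<in> V \<Longrightarrow> snd v = snd w \<Longrightarrow> v \<noteq> w \<Longrightarrow> z \<in> X \<Longrightarrow>
  dist (fst v) z < lam * r (snd v) \<Longrightarrow> dist (fst w) z < lam * r (snd v) \<Longrightarrow> hadj X a lam Xs v w"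
  unfolding hadj_unfold by auto

lemma hadj_sym: "hadj X a lam Xs v w \<Longrightarrow> hadj X a lam Xs w v"
  unfolding hadj_unfold by auto

lemma adj_cases: assumes "adj X a lam Xs par v w"
  shows "v \<in> V" "w \<in> V" "(snd v = snd w \<and> hadj X a lam Xs v w) \<or> (snd v = Suc (snd w) \<and> w = par v)
     \<or> (snd w = Suc (snd v) \<and> v = par w)"
proof -
  show "v \<in> V" "w \<in> V" using assms unfolding adj_def by auto
  then show "(snd v = snd w \<and> hadj X a lam Xs v w) \<or> (snd v = Suc (snd w) \<and> w = par v)
     \<or> (snd w = Suc (snd v) \<and> v = par w)"
  proof -
    have "(snd v \<ge> 1 \<and> w = par v) \<or> (snd w \<ge> 1 \<and> v = par w) \<or> hadj X a lam Xs v w"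
      using assms unfolding adj_def by auto
    moreover have "snd v = snd w" if "hadj X a lam Xs v w" using that unfolding hadj_def by auto
    moreover have "snd v = Suc (snd w)" if "snd v \<ge> 1" "w = par v"
      using par_props(2)[OF \<open>v \<in> V\<close> that(1)] that(2) that(1) by auto
    moreover have "snd w = Suc (snd v)" if "snd w \<ge> 1" "v = par w"
      using par_props(2)[OF \<open>w \<in> V\<close> that(1)] that by auto
    ultimately show ?thesis by blast
  qed
qed

lemma adj_step: assumes "adj X a lam Xs par v w" "Suc k \<le> snd v" "k \<le> snd w"
  shows "dist (fst v) (fst w) < 2 * r k"
proof -
  note c = adj_cases[OF assms(1)]
  have lr: "lam * r (snd v) \<le> r k"
  proof -
    have "lam * r (snd v) \<le> lam * r (Suc k)" using r_mono[OF assms(2)] lam_ge by (intro mult_left_mono) auto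
    then show ?thesis using r_Suc_lam[of k] by linarith
  qed
  show ?thesis
  proof -
    { assume h: "snd v = snd w" "hadj X a lam Xs v w"
      then have ?thesis using hadj_dist[OF h(2)] lr by linarith }
    moreover
    { assume h: "snd v = Suc (snd w)" "w = par v"
      then have "dist (fst v) (fst w) < r (snd v - 1)" using par_props(3)[OF c(1)] by auto
      moreover have "r (snd v - 1) \<le> r k" using assms(2) by (intro r_mono) auto
      ultimately have ?thesis using r_pos[of k] by linarith }
    moreover
    { assume h: "snd w = Suc (snd v)" "v = par w"
      then have "dist (fst w) (fst v) < r (snd w - 1)" using par_props(3)[OF c(2)] by auto
      moreover have "r (snd w - 1) \<le> r k" using assms h by (intro r_mono) auto
      ultimately have ?thesis using r_pos[of k] by (simp add: dist_commute) }
    ultimately show ?thesis using c(3) by blast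
  qed
qed


definition NB where "NB q = {w \<in> verts Xs. snd w = snd q \<and> (w = q \<or> adj X a lam Xs par q w)}"
abbreviation rs where "rs \<equiv> rho_star X a lam Xs par \<rho>"
abbreviation pw where "pw \<equiv> piw par \<rho>"
definition mm where "mm q = Min (pw ` NB q)"

lemma rs_eq: "rs q = Min (\<rho> ` NB q)"
  unfolding rho_star_def NB_def by simp

lemma NB_finite: "finite (NB q)"
proof -
  have "NB q \<subseteq> (\<lambda>x. (x, snd q)) ` Xs (snd q)"
    unfolding NB_def verts_iff by (auto simp: image_iff)
  then show ?thesis using finite_Xs finite_subset by blast
qed

lemma NB_self: "q \<in> V \<Longrightarrow> q \<in> NB q" unfolding NB_def by auto

lemma NB_D: "w \<in> NB q \<Longrightarrow> w \<in> V \<and> snd w = snd q \<and> (w = q \<or> hadj X a lam Xs q w)"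
proof -
  assume w: "w \<in> NB q"
  then have "w \<in> V" "snd w = snd q" "w = q \<or> adj X a lam Xs par q w" unfolding NB_def by auto
  moreover have "hadj X a lam Xs q w" if "adj X a lam Xs par q w" "snd w = snd q"
    using adj_cases(3)[OF that(1)] that(2) by auto
  ultimately show ?thesis by blast
qed

lemma NB_I: "hadj X a lam Xs q w \<Longrightarrow> w \<in> NB q"
  unfolding NB_def adj_def hadj_def by auto

lemma NB_ne: "q \<in> V \<Longrightarrow> NB q \<noteq> {}" using NB_self by blast

lemma rs_le: "q \<in> V \<Longrightarrow> w \<in> NB q \<Longrightarrow> rs q \<le> \<rho> w"
  unfolding rs_eq using NB_finite by (intro Min_le) auto

lemma rs_pos: "q \<in> V \<Longrightarrow> rs q > 0"
  unfolding rs_eq using NB_finite NB_ne rho_pos NB_D by (subst Min_gr_iff) auto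

lemma genl_sub: "v \<in> V \<Longrightarrow> snd v = k \<Longrightarrow> set (genl par k v) \<subseteq> V"
proof (induction k arbitrary: v)
  case 0 then show ?case by simp
next
  case (Suc k)
  have "par v \<in> V" "snd (par v) = k" using par_props[OF Suc.prems(1)] Suc.prems by auto
  then show ?case using Suc by auto
qed

lemma pw_pos: "v \<in> V \<Longrightarrow> pw v > 0"
proof -
  assume v: "v \<in> V"
  have "set (genealogy par v) \<subseteq> V" unfolding genealogy_def using genl_sub[OF v] by simp
  then have "\<forall>x\<in>set (map \<rho> (genealogy par v)). x > 0" using rho_pos by auto
  moreover have "\<And>xs::real list. \<forall>x\<in>set xs. x > 0 \<Longrightarrow> prod_list xs > 0"
    subgoal for xs by (induction xs) auto done
  ultimately show ?thesis unfolding piw_def by blast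
qed

lemma pw_step: assumes "w \<in> V" "snd w \<ge> 1" shows "pw w = pw (par w) * \<rho> w"
proof -
  obtain k where k: "snd w = Suc k" using assms(2) by (cases "snd w") auto
  have "snd (par w) = k" using par_props(2)[OF assms] k by simp
  then show ?thesis unfolding piw_def genealogy_def k by simp
qed

lemma mm_le: "w \<in> NB q \<Longrightarrow> mm q \<le> pw w"
  unfolding mm_def using NB_finite by (intro Min_le) auto

lemma mm_pos: "q \<in> V \<Longrightarrow> mm q > 0"
  unfolding mm_def using NB_finite NB_ne pw_pos NB_D by (subst Min_gr_iff) auto

lemma mm_attained: "q \<in> V \<Longrightarrow> \<exists>w\<in>NB q. mm q = pw w"
proof -
  assume "q \<in> V"
  then have "Min (pw ` NB q) \<in> pw ` NB q" using NB_finite NB_ne by (intro Min_in) auto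
  then show ?thesis unfolding mm_def by auto
qed

lemma mm_ge: "q \<in> V \<Longrightarrow> (\<And>w. w \<in> NB q \<Longrightarrow> c \<le> pw w) \<Longrightarrow> c \<le> mm q"
  unfolding mm_def using NB_finite NB_ne by (subst Min_ge_iff) auto

definition anc where "anc l w = (par ^^ (snd w - l)) w"

lemma anc_gen: "\<And>w. w \<in> V \<Longrightarrow> snd w = l + k \<Longrightarrow> (par ^^ k) w \<in> V \<and> snd ((par ^^ k) w) = l \<and>
   dist (fst w) (fst ((par ^^ k) w)) \<le> 6/5 * (r l - r (snd w))"
proof (induction k)
  case 0 then show ?case by simp
next
  case (Suc k)
  have w1: "snd w \<ge> 1" using Suc.prems by simp
  note pp = par_props[OF Suc.prems(1) w1]
  have e: "(par ^^ Suc k) w = (par ^^ k) (par w)" by (simp add: funpow_Suc_right del: funpow.simps)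
  have ih: "(par ^^ k) (par w) \<in> V \<and> snd ((par ^^ k) (par w)) = l \<and>
     dist (fst (par w)) (fst ((par ^^ k) (par w))) \<le> 6/5 * (r l - r (snd (par w)))"
    using Suc.IH[OF pp(1)] pp(2) Suc.prems by simp
  have sw: "snd (par w) = l + k" "snd w = Suc (l + k)" using pp(2) Suc.prems by auto
  have r6: "6 * r (snd w) \<le> r (snd (par w))" using r_Suc_6[of "l + k"] sw by simp
  have "dist (fst w) (fst ((par ^^ k) (par w))) \<le> dist (fst w) (fst (par w)) + dist (fst (par w)) (fst ((par ^^ k) (par w)))"
    by (rule dist_triangle)
  also have "\<dots> \<le> r (snd (par w)) + 6/5 * (r l - r (snd (par w)))"
  proof -
    have "dist (fst w) (fst (par w)) < r (snd (par w))" using pp(3) sw by simp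
    moreover have "dist (fst (par w)) (fst ((par ^^ k) (par w))) \<le> 6/5 * (r l - r (snd (par w)))" using ih by blast
    ultimately show ?thesis by linarith
  qed
  also have "\<dots> \<le> 6/5 * (r l - r (snd w))" using r6 unfolding right_diff_distrib by linarith
  finally show ?case using ih e by simp
qed

lemma anc_props: assumes "w \<in> V" "l \<le> snd w"
  shows "anc l w \<in> V" "snd (anc l w) = l" "dist (fst w) (fst (anc l w)) < 6/5 * r l"
proof -
  have "snd w = l + (snd w - l)" using assms by simp
  note g = anc_gen[OF assms(1) this]
  show "anc l w \<in> V" "snd (anc l w) = l" using g unfolding anc_def by auto
  show "dist (fst w) (fst (anc l w)) < 6/5 * r l" using g r_pos[of "snd w"] unfolding anc_def by auto
qed

lemma anc_self: "anc (snd w) w = w" unfolding anc_def by simp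

lemma anc_par: assumes "Suc l \<le> snd w" shows "par (anc (Suc l) w) = anc l w"
proof -
  have "snd w - l = Suc (snd w - Suc l)" using assms by simp
  then show ?thesis unfolding anc_def by simp
qed

lemma anc_one: "snd w = Suc l \<Longrightarrow> anc l w = par w" unfolding anc_def by simp


lemma pay: assumes p: "p \<in> V" "snd p = l" and q: "q \<in> V" "snd q = Suc l" "dist (fst p) (fst q) < 2 * r l"
  and w: "w \<in> NB q" shows "mm p * rs q \<le> pw w"
proof -
  have wV: "w \<in> V" "snd w = Suc l" "w = q \<or> hadj X a lam Xs q w" using NB_D[OF w] q by auto
  have dqw: "dist (fst q) (fst w) < 2 * r l"
  proof (cases "w = q")
    case True then show ?thesis using r_pos[of l] by simp
  next
    case False
    then have "dist (fst q) (fst w) < 2 * lam * r (Suc l)" using wV(3) hadj_dist q(2) by fastforce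
    then show ?thesis using r_Suc_lam[of l] by linarith
  qed
  have w1: "snd w \<ge> 1" using wV by simp
  note pp = par_props[OF wV(1) w1]
  have dpw: "dist (fst w) (fst (par w)) < r l" using pp(3) wV(2) by simp
  have lam6: "6 * r l \<le> lam * r l" using lam_ge r_pos[of l] by (intro mult_right_mono) auto
  have "par w \<in> NB p"
  proof (cases "par w = p")
    case True then show ?thesis using NB_self p by simp
  next
    case False
    have "dist (fst p) (fst q) < lam * r l" using q(3) lam6 r_pos[of l] by linarith
    then have d1: "dist (fst p) (fst q) < lam * r (snd p)" using p(2) by simp
    have "dist (fst (par w)) (fst q) \<le> dist (fst w) (fst (par w)) + dist (fst q) (fst w)"
      using dist_triangle[of "fst (par w)" "fst q" "fst w"] by (simp add: dist_commute)
    then have "dist (fst (par w)) (fst q) < lam * r l" using dpw dqw lam6 r_pos[of l] by linarith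
    then have d2: "dist (fst (par w)) (fst q) < lam * r (snd p)" using p(2) by simp
    have "hadj X a lam Xs p (par w)"
      using hadj_intro[OF p(1) pp(1) _ _ fst_in_X[OF q(1)] d1 d2] pp(2) wV(2) p(2) False by auto
    then show ?thesis by (rule NB_I)
  qed
  then have "mm p \<le> pw (par w)" by (rule mm_le)
  moreover have "rs q \<le> \<rho> w" using rs_le[OF q(1) w] .
  moreover have "0 \<le> rs q" using rs_pos[OF q(1)] by simp
  moreover have "0 \<le> pw (par w)" using pw_pos[OF pp(1)] by simp
  ultimately have "mm p * rs q \<le> pw (par w) * \<rho> w" by (intro mult_mono) auto
  then show ?thesis using pw_step[OF wV(1) w1] by simp
qed

lemma Lh_cons2: "L_h X a lam Xs par (x # y # zs) \<rho> = min (rs x) (rs y) + L_h X a lam Xs par (y # zs) \<rho>"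
  unfolding L_h_def by (simp add: sum.lessThan_Suc_shift del: sum.lessThan_Suc)

lemma Lh_single: "L_h X a lam Xs par [x] \<rho> = 0"
  unfolding L_h_def by simp

lemma trunc:
  "\<forall>x\<in>set ch. x \<in> V \<Longrightarrow> successively (\<lambda>x y. x = y \<or> hadj X a lam Xs x y) ch \<Longrightarrow> ch \<noteq> [] \<Longrightarrow>
   I (hd ch) \<Longrightarrow> (\<exists>x\<in>set ch. \<not> I x) \<Longrightarrow>
   \<exists>h. is_hpath X a lam Xs h \<and> hd h = hd ch \<and> set h \<subseteq> set ch \<and> \<not> I (last h) \<and>
       L_h X a lam Xs par h \<rho> \<le> Wsum I rs ch"
proof (induction ch)
  case Nil then show ?case by simp
next
  case (Cons x rest)
  then obtain y rest' where rest: "rest = y # rest'" by (cases rest) auto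
  have nn: "Wsum I rs rest \<ge> 0" using Wsum_nonneg[of rest rs I] rs_pos Cons.prems(1) by fastforce
  have "x \<in> V" "y \<in> V" using Cons.prems(1) rest by auto
  then have mn: "min (rs x) (rs y) \<ge> 0" using rs_pos[of x] rs_pos[of y] by simp
  have W: "Wsum I rs (x # rest) = min (rs x) (rs y) + Wsum I rs rest"
    using Cons.prems(4) rest by simp
  have xy: "x = y \<or> hadj X a lam Xs x y" and sr: "successively (\<lambda>x y. x = y \<or> hadj X a lam Xs x y) rest"
    using Cons.prems(2) rest by auto
  show ?case
  proof (cases "x = y")
    case True
    have "\<exists>x\<in>set rest. \<not> I x" using Cons.prems(4,5) by auto
    then obtain h where h: "is_hpath X a lam Xs h" "hd h = hd rest" "set h \<subseteq> set rest" "\<not> I (last h)"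
      "L_h X a lam Xs par h \<rho> \<le> Wsum I rs rest"
      using Cons.IH Cons.prems True rest by auto
    then show ?thesis using True rest W mn by auto
  next
    case False
    then have hxy: "hadj X a lam Xs x y" using xy by simp
    show ?thesis
    proof (cases "I y")
      case False
      have "is_hpath X a lam Xs [x, y]" unfolding is_hpath_def using hxy Cons.prems(1) rest by auto
      moreover have "L_h X a lam Xs par [x, y] \<rho> = min (rs x) (rs y)" using Lh_cons2[of x y "[]"] Lh_single by simp
      ultimately show ?thesis using False rest W nn by (intro exI[of _ "[x, y]"]) auto
    next
      case True
      have "\<exists>x\<in>set rest. \<not> I x" using Cons.prems(4,5) by auto
      then obtain h where h: "is_hpath X a lam Xs h" "hd h = y" "set h \<subseteq> set rest" "\<not> I (last h)"
        "L_h X a lam Xs par h \<rho> \<le> Wsum I rs rest"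
        using Cons.IH Cons.prems True rest sr by auto
      have hne: "h \<noteq> []" using h(1) unfolding is_hpath_def by simp
      then obtain h' where h': "h = y # h'" using h(2) by (cases h) auto
      have "is_hpath X a lam Xs (x # h)" using h(1) hxy Cons.prems(1) h' unfolding is_hpath_def by auto
      moreover have "L_h X a lam Xs par (x # h) \<rho> = min (rs x) (rs y) + L_h X a lam Xs par h \<rho>"
        using Lh_cons2 h' by simp
      ultimately show ?thesis using h hne W by (intro exI[of _ "x # h"]) auto
    qed
  qed
qed


abbreviation ADJ where "ADJ \<equiv> adj X a lam Xs par"
abbreviation HADJ where "HADJ \<equiv> hadj X a lam Xs"

definition claim_hyp where
  "claim_hyp l p \<gamma> \<longleftrightarrow> p \<in> V \<and> snd p = l \<and> \<gamma> \<noteq> [] \<and> distinct \<gamma> \<and> set \<gamma> \<subseteq> V \<and>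
     successively ADJ \<gamma> \<and> (\<forall>w\<in>set \<gamma>. l \<le> snd w) \<and> anc l (hd \<gamma>) = p \<and>
     4 * r l \<le> dist (fst p) (fst (last \<gamma>))"

lemma sum_set_app: "distinct (xs @ ys) \<Longrightarrow> sum f (set (xs @ ys)) = sum f (set xs) + sum f (set ys)"
  by (simp add: sum.union_disjoint)

lemma sum_pw_mono: "A \<subseteq> B \<Longrightarrow> finite B \<Longrightarrow> B \<subseteq> V \<Longrightarrow> sum pw A \<le> sum pw B"
  by (rule sum_mono2) (auto intro: less_imp_le pw_pos)

lemma sum_pw_nonneg: "B \<subseteq> V \<Longrightarrow> 0 \<le> sum pw B"
  by (rule sum_nonneg) (auto intro: less_imp_le pw_pos)

lemma greedy:
  assumes p: "p \<in> V" "snd p = l"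
    and IH: "\<forall>\<sigma> q. length \<sigma> \<le> N \<longrightarrow> claim_hyp (Suc l) q \<sigma> \<longrightarrow> mm q \<le> sum pw (set (butlast \<sigma>))"
  shows "length Q \<le> N \<Longrightarrow> Q \<noteq> [] \<Longrightarrow> distinct Q \<Longrightarrow> set Q \<subseteq> V \<Longrightarrow> successively ADJ Q \<Longrightarrow>
    (\<forall>w\<in>set Q. Suc l \<le> snd w) \<Longrightarrow> t \<in> V \<Longrightarrow> snd t = Suc l \<Longrightarrow>
    (hd Q = t \<or> (Suc (Suc l) \<le> snd (hd Q) \<and> anc (Suc l) (hd Q) = t)) \<Longrightarrow>
    \<exists>ch. ch \<noteq> [] \<and> (\<forall>x\<in>set ch. x \<in> V \<and> snd x = Suc l) \<and> successively (\<lambda>x y. x = y \<or> HADJ x y) ch \<and>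
      hd ch = t \<and> (snd (last Q) = Suc l \<longrightarrow> last ch = last Q) \<and>
      (Suc (Suc l) \<le> snd (last Q) \<longrightarrow> dist (fst (last ch)) (fst (last Q)) < 4 * r (Suc l)) \<and>
      mm p * Wsum (\<lambda>x. dist (fst p) (fst x) < 2 * r l) rs ch \<le> sum pw (set (if hd Q = t then tl Q else Q))"
proof (induction "length Q" arbitrary: Q t rule: less_induct)
  case less
  define I :: "'a \<times> nat \<Rightarrow> bool" where "I = (\<lambda>x. dist (fst p) (fst x) < 2 * r l)"
  have mmp: "mm p \<ge> 0" using mm_pos[OF p(1)] by simp
  have lam4: "4 * r (Suc l) < lam * r (Suc l)" using lam_ge r_pos[of "Suc l"] by (intro mult_strict_right_mono) auto
  show ?case
  proof (cases "hd Q = t")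
    case True
    then obtain Q' where Q: "Q = t # Q'" using less.prems(2) by (cases Q) auto
    show ?thesis
    proof (cases Q')
      case Nil
      then show ?thesis using Q less.prems by (intro exI[of _ "[t]"]) auto
    next
      case (Cons v Q'')
      have av: "ADJ t v" using less.prems(5) Q Cons by simp
      have vV: "v \<in> V" "Suc l \<le> snd v" using less.prems Q Cons by auto
      note ac = adj_cases(3)[OF av]
      have sQ': "set Q' \<subseteq> V" "distinct Q'" "successively ADJ Q'" "\<forall>w\<in>set Q'. Suc l \<le> snd w"
        "length Q' \<le> N" "Q' \<noteq> []"
        using less.prems Q Cons by (auto simp: successively_Cons)
      have lt: "length Q' < length Q" using Q by simp
      show ?thesis
      proof (cases "snd t = snd v")
        case True
        then have hv: "HADJ t v" using ac by auto
        have sv: "snd v = Suc l" using True less.prems by simp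
        obtain ch' where ch': "ch' \<noteq> []" "\<forall>x\<in>set ch'. x \<in> V \<and> snd x = Suc l"
          "successively (\<lambda>x y. x = y \<or> HADJ x y) ch'" "hd ch' = v"
          "snd (last Q') = Suc l \<longrightarrow> last ch' = last Q'"
          "Suc (Suc l) \<le> snd (last Q') \<longrightarrow> dist (fst (last ch')) (fst (last Q')) < 4 * r (Suc l)"
          "mm p * Wsum I rs ch' \<le> sum pw (set (if hd Q' = v then tl Q' else Q'))"
          using less.hyps[OF lt sQ'(5,6,2,1,3,4) vV(1) sv] Cons unfolding I_def by auto
        obtain ch'' where ch'': "ch' = v # ch''" using ch'(1,4) by (cases ch') auto
        have W: "Wsum I rs (t # ch') = (if I t then min (rs t) (rs v) else 0) + Wsum I rs ch'"
          using ch'' by simp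
        have "(if I t then mm p * min (rs t) (rs v) else 0) \<le> pw v"
        proof (cases "I t")
          case True
          have "mm p * rs t \<le> pw v" using pay[OF p less.prems(7,8) _ NB_I[OF hv]] True unfolding I_def by simp
          moreover have "mm p * min (rs t) (rs v) \<le> mm p * rs t" using mmp by (intro mult_left_mono) auto
          ultimately show ?thesis using True by simp
        qed (use pw_pos[OF vV(1)] in auto)
        then have "mm p * Wsum I rs (t # ch') \<le> pw v + sum pw (set Q'')"
          using ch'(7) Cons W by (auto simp: distrib_left split: if_splits)
        moreover have "sum pw (set (tl Q)) = pw v + sum pw (set Q'')"
          using Q Cons less.prems(3) by simp
        moreover have "successively (\<lambda>x y. x = y \<or> HADJ x y) (t # ch')"
          using ch'(3,4) hv ch'' by simp
        ultimately show ?thesis using ch' less.prems Q Cons True unfolding I_def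
          by (intro exI[of _ "t # ch'"]) auto
      next
        case False
        then have tv: "t = par v" "snd v = Suc (Suc l)" using ac less.prems(8) vV(2) by auto
        have anc_v: "anc (Suc l) v = t" using anc_one[of v "Suc l"] tv by simp
        have hne: "hd Q' \<noteq> t" using tv Cons less.prems(8) by auto
        obtain ch' where ch': "ch' \<noteq> []" "\<forall>x\<in>set ch'. x \<in> V \<and> snd x = Suc l"
          "successively (\<lambda>x y. x = y \<or> HADJ x y) ch'" "hd ch' = t"
          "snd (last Q') = Suc l \<longrightarrow> last ch' = last Q'"
          "Suc (Suc l) \<le> snd (last Q') \<longrightarrow> dist (fst (last ch')) (fst (last Q')) < 4 * r (Suc l)"
          "mm p * Wsum I rs ch' \<le> sum pw (set (if hd Q' = t then tl Q' else Q'))"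
          using less.hyps[OF lt sQ'(5,6,2,1,3,4) less.prems(7,8)] Cons tv anc_v unfolding I_def by auto
        then show ?thesis using Q Cons hne unfolding I_def by (intro exI[of _ ch']) auto
      qed
    qed
  next
    case False
    then have deep: "Suc (Suc l) \<le> snd (hd Q)" "anc (Suc l) (hd Q) = t" using less.prems(9) by auto
    define D where "D = (\<lambda>w. Suc (Suc l) \<le> snd w \<and> dist (fst t) (fst w) < 4 * r (Suc l))"
    define S where "S = takeWhile D Q"
    define R where "R = dropWhile D Q"
    have QSR: "Q = S @ R" unfolding S_def R_def by simp
    have hdQV: "hd Q \<in> V" using less.prems(2,4) by auto
    have "dist (fst (hd Q)) (fst t) < 6/5 * r (Suc l)"
      using anc_props(3)[OF hdQV, of "Suc l"] deep by simp
    then have "D (hd Q)" unfolding D_def using deep r_pos[of "Suc l"] by (simp add: dist_commute)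
    then have Sne: "S \<noteq> []" unfolding S_def using less.prems(2) by (cases Q) auto
    have DS: "\<forall>w\<in>set S. D w" unfolding S_def by (meson set_takeWhileD)
    have lastS: "last S \<in> set S" using Sne by simp
    have dS: "D (last S)" using DS lastS by blast
    have RHS: "sum pw (set (if hd Q = t then tl Q else Q)) = sum pw (set Q)" using False by simp
    have sumQ: "sum pw (set Q) = sum pw (set S) + sum pw (set R)"
      using QSR less.prems(3) sum_set_app by metis
    have SV: "set S \<subseteq> V" "set R \<subseteq> V" using QSR less.prems(4) by auto
    have sumS0: "0 \<le> sum pw (set S)" "0 \<le> sum pw (set R)" using sum_pw_nonneg SV by auto
    have succ: "successively ADJ S" "successively ADJ R" "R \<noteq> [] \<longrightarrow> ADJ (last S) (hd R)"
      using less.prems(5) QSR Sne by (auto simp: successively_append_iff)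
    have lvR: "\<forall>w\<in>set R. Suc l \<le> snd w" using less.prems(6) QSR by auto
    have distR: "distinct R" "distinct S" using less.prems(3) QSR by auto
    show ?thesis
    proof (cases R)
      case Nil
      have "last Q = last S" using QSR Nil by simp
      then have "Suc (Suc l) \<le> snd (last Q)" "dist (fst t) (fst (last Q)) < 4 * r (Suc l)"
        using dS unfolding D_def by auto
      then show ?thesis using less.prems(7,8) RHS sumQ sumS0 Nil
        by (intro exI[of _ "[t]"]) auto
    next
      case (Cons s' R')
      have ndS: "\<not> D s'" using Cons unfolding R_def dropWhile_eq_Cons_conv by blast
      have as: "ADJ (last S) s'" using succ(3) Cons by simp
      have s'V: "s' \<in> V" "Suc l \<le> snd s'" using SV lvR Cons by auto
      have lastSV: "last S \<in> V" using SV lastS by auto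
      have lt: "length R < length Q" using QSR Sne by simp
      have lastQ: "last Q = last R" using QSR Cons by simp
      have ds': "dist (fst (last S)) (fst s') < 2 * r (Suc l)"
        using adj_step[OF as, of "Suc l"] dS s'V unfolding D_def by auto
      show ?thesis
      proof (cases "Suc (Suc l) \<le> snd s'")
        case True
        then have far: "4 * r (Suc l) \<le> dist (fst t) (fst s')" using ndS unfolding D_def by auto
        define \<sigma> where "\<sigma> = S @ [s']"
        have "claim_hyp (Suc l) t \<sigma>"
          unfolding claim_hyp_def
        proof (intro conjI)
          show "t \<in> V" "snd t = Suc l" using less.prems by auto
          show "\<sigma> \<noteq> []" unfolding \<sigma>_def by simp
          show "distinct \<sigma>" using less.prems(3) QSR Cons unfolding \<sigma>_def by auto
          show "set \<sigma> \<subseteq> V" using SV s'V unfolding \<sigma>_def by auto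
          show "successively ADJ \<sigma>" using succ(1) as Sne unfolding \<sigma>_def by (auto simp: successively_append_iff)
          show "\<forall>w\<in>set \<sigma>. Suc l \<le> snd w" using less.prems(6) QSR Cons unfolding \<sigma>_def by auto
          show "anc (Suc l) (hd \<sigma>) = t" using deep QSR Sne unfolding \<sigma>_def by simp
          show "4 * r (Suc l) \<le> dist (fst t) (fst (last \<sigma>))" using far unfolding \<sigma>_def by simp
        qed
        moreover have "length \<sigma> \<le> N" using less.prems(1) QSR Cons unfolding \<sigma>_def by simp
        ultimately have "mm t \<le> sum pw (set (butlast \<sigma>))" using IH by blast
        then have mt: "mm t \<le> sum pw (set S)" unfolding \<sigma>_def by simp
        define t' where "t' = anc (Suc l) s'"
        have t'p: "t' \<in> V" "snd t' = Suc l" "dist (fst s') (fst t') < 6/5 * r (Suc l)"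
          using anc_props[OF s'V(1), of "Suc l"] True unfolding t'_def by auto
        have hne: "hd R \<noteq> t'" using Cons t'p True by auto
        obtain ch' where ch': "ch' \<noteq> []" "\<forall>x\<in>set ch'. x \<in> V \<and> snd x = Suc l"
          "successively (\<lambda>x y. x = y \<or> HADJ x y) ch'" "hd ch' = t'"
          "snd (last R) = Suc l \<longrightarrow> last ch' = last R"
          "Suc (Suc l) \<le> snd (last R) \<longrightarrow> dist (fst (last ch')) (fst (last R)) < 4 * r (Suc l)"
          "mm p * Wsum I rs ch' \<le> sum pw (set (if hd R = t' then tl R else R))"
          using less.hyps[OF lt _ _ distR(1) SV(2) succ(2) lvR t'p(1,2)] less.prems(1) QSR Cons True
            unfolding I_def t'_def by auto
        obtain ch'' where ch'': "ch' = t' # ch''" using ch'(1,4) by (cases ch') auto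
        have dtS: "dist (fst t) (fst (last S)) < 4 * r (Suc l)" using dS unfolding D_def by auto
        have "dist (fst t') (fst (last S)) \<le> dist (fst s') (fst t') + dist (fst (last S)) (fst s')"
          using dist_triangle[of "fst t'" "fst (last S)" "fst s'"] by (simp add: dist_commute)
        then have dt'S: "dist (fst t') (fst (last S)) < lam * r (Suc l)"
          using t'p(3) ds' lam4 r_pos[of "Suc l"] by linarith
        have tt': "t \<noteq> t'"
        proof
          assume "t = t'"
          then have "dist (fst t) (fst s') < 6/5 * r (Suc l)" using t'p(3) by (simp add: dist_commute)
          then show False using far r_pos[of "Suc l"] by linarith
        qed
        have htt': "HADJ t t'"
          using hadj_intro[OF less.prems(7) t'p(1) _ tt' fst_in_X[OF lastSV], of] dtS dt'S lam4
            less.prems(8) t'p(2) by auto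
        have W: "Wsum I rs (t # ch') = (if I t then min (rs t) (rs t') else 0) + Wsum I rs ch'"
          using ch'' by simp
        have "(if I t then mm p * min (rs t) (rs t') else 0) \<le> sum pw (set S)"
        proof (cases "I t")
          case True
          have "mm p * rs t \<le> mm t"
            using pay[OF p less.prems(7,8)] True less.prems(7) unfolding I_def by (intro mm_ge) auto
          moreover have "mm p * min (rs t) (rs t') \<le> mm p * rs t" using mmp by (intro mult_left_mono) auto
          ultimately show ?thesis using True mt by simp
        qed (use sumS0 in auto)
        then have "mm p * Wsum I rs (t # ch') \<le> sum pw (set S) + sum pw (set R)"
          using ch'(7) hne W by (auto simp: distrib_left split: if_splits)
        moreover have "successively (\<lambda>x y. x = y \<or> HADJ x y) (t # ch')"
          using ch'(3) htt' ch'' by simp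
        ultimately show ?thesis using ch' less.prems(7,8) lastQ RHS sumQ unfolding I_def
          by (intro exI[of _ "t # ch'"]) auto
      next
        case False
        then have s'l: "snd s' = Suc l" using s'V by simp
        have s'par: "s' = par (last S)" "snd (last S) = Suc (Suc l)"
          using adj_cases(3)[OF as] s'l dS unfolding D_def by auto
        have dSs': "dist (fst (last S)) (fst s') < r (Suc l)"
          using par_props(3)[OF lastSV] s'par by simp
        obtain ch' where ch': "ch' \<noteq> []" "\<forall>x\<in>set ch'. x \<in> V \<and> snd x = Suc l"
          "successively (\<lambda>x y. x = y \<or> HADJ x y) ch'" "hd ch' = s'"
          "snd (last R) = Suc l \<longrightarrow> last ch' = last R"
          "Suc (Suc l) \<le> snd (last R) \<longrightarrow> dist (fst (last ch')) (fst (last R)) < 4 * r (Suc l)"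
          "mm p * Wsum I rs ch' \<le> sum pw (set (if hd R = s' then tl R else R))"
          using less.hyps[OF lt _ _ distR(1) SV(2) succ(2) lvR s'V(1) s'l] less.prems(1) QSR Cons
            unfolding I_def by auto
        have sR: "sum pw (set R) = pw s' + sum pw (set R')" using distR(1) Cons by simp
        have sR'0: "0 \<le> sum pw (set R')" using sum_pw_nonneg SV Cons by auto
        show ?thesis
        proof (cases "t = s'")
          case True
          then show ?thesis using ch' Cons lastQ RHS sumQ sR sumS0 pw_pos[OF s'V(1)]
            unfolding I_def by (intro exI[of _ ch']) auto
        next
          case ts': False
          obtain ch'' where ch'': "ch' = s' # ch''" using ch'(1,4) by (cases ch') auto
          have dtS: "dist (fst t) (fst (last S)) < lam * r (Suc l)" using dS lam4 unfolding D_def by auto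
          have dsS: "dist (fst s') (fst (last S)) < lam * r (Suc l)"
          proof -
            have "dist (fst s') (fst (last S)) < r (Suc l)" using dSs' by (simp add: dist_commute)
            then show ?thesis using lam4 r_pos[of "Suc l"] by linarith
          qed
          have hts: "HADJ t s'"
            using hadj_intro[OF less.prems(7) s'V(1) _ ts' fst_in_X[OF lastSV]] dtS dsS
              less.prems(8) s'l by auto
          have W: "Wsum I rs (t # ch') = (if I t then min (rs t) (rs s') else 0) + Wsum I rs ch'"
            using ch'' by simp
          have "(if I t then mm p * min (rs t) (rs s') else 0) \<le> pw s'"
          proof (cases "I t")
            case True
            have "mm p * rs t \<le> pw s'" using pay[OF p less.prems(7,8) _ NB_I[OF hts]] True unfolding I_def by simp
            moreover have "mm p * min (rs t) (rs s') \<le> mm p * rs t" using mmp by (intro mult_left_mono) auto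
            ultimately show ?thesis using True by simp
          qed (use pw_pos[OF s'V(1)] in auto)
          then have "mm p * Wsum I rs (t # ch') \<le> pw s' + sum pw (set R')"
            using ch'(7) Cons W by (auto simp: distrib_left split: if_splits)
          moreover have "successively (\<lambda>x y. x = y \<or> HADJ x y) (t # ch')"
            using ch'(3) hts ch'' by simp
          ultimately show ?thesis using ch' less.prems(7,8) lastQ RHS sumQ sR sumS0 unfolding I_def
            by (intro exI[of _ "t # ch'"]) auto
        qed
      qed
    qed
  qed
qed


lemma successively_take: "successively P xs \<Longrightarrow> successively P (take n xs)"
  by (metis append_take_drop_id successively_append_iff)

lemma claim: "claim_hyp l p \<gamma> \<Longrightarrow> mm p \<le> sum pw (set (butlast \<gamma>))"
proof (induction "length \<gamma>" arbitrary: l p \<gamma> rule: less_induct)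
  case less
  have p: "p \<in> V" "snd p = l" and g: "\<gamma> \<noteq> []" "distinct \<gamma>" "set \<gamma> \<subseteq> V" "successively ADJ \<gamma>"
    "\<forall>w\<in>set \<gamma>. l \<le> snd w" "anc l (hd \<gamma>) = p" "4 * r l \<le> dist (fst p) (fst (last \<gamma>))"
    using less.prems unfolding claim_hyp_def by auto
  have mmp: "mm p \<ge> 0" using mm_pos[OF p(1)] by simp
  define Ok where "Ok = (\<lambda>j. j < length \<gamma> \<and> 4 * r l \<le> dist (fst p) (fst (\<gamma> ! j)))"
  have O1: "Ok (length \<gamma> - 1)" unfolding Ok_def using g(1,7) by (simp add: last_conv_nth)
  define j where "j = (LEAST j. Ok j)"
  have Oj: "Ok j" unfolding j_def using O1 by (rule LeastI)
  have Oi: "\<And>i. i < j \<Longrightarrow> \<not> Ok i" unfolding j_def by (rule not_less_Least)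
  have hdV: "hd \<gamma> \<in> V" "l \<le> snd (hd \<gamma>)" using g by auto
  have dhd: "dist (fst (hd \<gamma>)) (fst p) < 6/5 * r l" using anc_props(3)[OF hdV] g(6) by simp
  have j0: "j \<noteq> 0"
  proof
    assume "j = 0"
    then have "4 * r l \<le> dist (fst p) (fst (hd \<gamma>))" using Oj g(1) unfolding Ok_def by (simp add: hd_conv_nth)
    then show False using dhd r_pos[of l] by (simp add: dist_commute)
  qed
  have jlt: "j < length \<gamma>" using Oj unfolding Ok_def by simp
  define P where "P = take j \<gamma>"
  have Pne: "P \<noteq> []" unfolding P_def using j0 g(1) by simp
  have hdP: "hd P = hd \<gamma>" unfolding P_def using j0 g(1) by (simp add: hd_take)
  have PV: "set P \<subseteq> V" unfolding P_def using g(3) set_take_subset by fastforce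
  have Psub: "set P \<subseteq> set (butlast \<gamma>)"
    unfolding P_def butlast_conv_take using jlt by (intro set_take_subset_set_take) simp
  have fin: "finite (set (butlast \<gamma>))" "set (butlast \<gamma>) \<subseteq> V" using g(3) by (auto dest: in_set_butlastD)
  have Pin: "\<forall>w\<in>set P. dist (fst p) (fst w) < 4 * r l"
  proof
    fix w assume "w \<in> set P"
    then obtain i where i: "i < length P" "w = P ! i" by (auto simp: in_set_conv_nth)
    then have "i < j" "w = \<gamma> ! i" unfolding P_def by auto
    then show "dist (fst p) (fst w) < 4 * r l" using Oi[of i] jlt unfolding Ok_def by auto
  qed
  show ?case
  proof (cases "\<exists>w\<in>set P. snd w = l")
    case True
    then obtain w where w: "w \<in> set P" "snd w = l" by blast
    have wV: "w \<in> V" using w PV by auto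
    have "w \<in> NB p"
    proof (cases "w = p")
      case True then show ?thesis using NB_self p by simp
    next
      case False
      have "4 * r l < lam * r l" using lam_ge r_pos[of l] by (intro mult_strict_right_mono) auto
      then have d: "dist (fst p) (fst w) < lam * r (snd p)" using Pin w p by fastforce
      have "HADJ p w" using hadj_intro[OF p(1) wV _ not_sym[OF False] fst_in_X[OF wV] d] w(2) p(2) r_pos[of l] lam_ge
        by (simp add: mult_pos_pos)
      then show ?thesis by (rule NB_I)
    qed
    then have "mm p \<le> pw w" by (rule mm_le)
    also have "\<dots> \<le> sum pw (set (butlast \<gamma>))"
      using w Psub fin by (intro member_le_sum) (auto intro: less_imp_le pw_pos)
    finally show ?thesis .
  next
    case False
    then have lvP: "\<forall>w\<in>set P. Suc l \<le> snd w" using g(5) P_def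
      by (metis Suc_leI in_set_takeD le_neq_implies_less)
    have hdl: "Suc l \<le> snd (hd \<gamma>)" using lvP hdP Pne by (metis hd_in_set)
    define t where "t = anc (Suc l) (hd \<gamma>)"
    have tp: "t \<in> V" "snd t = Suc l" using anc_props[OF hdV(1) hdl] unfolding t_def by auto
    have part: "par t = p" using anc_par[OF hdl] g(6) unfolding t_def by simp
    have dpt: "dist (fst p) (fst t) < r l"
      using par_props(3)[OF tp(1)] tp(2) part by (simp add: dist_commute)
    have mode: "hd P = t \<or> (Suc (Suc l) \<le> snd (hd P) \<and> anc (Suc l) (hd P) = t)"
    proof (cases "snd (hd \<gamma>) = Suc l")
      case True then show ?thesis using anc_self[of "hd \<gamma>"] hdP unfolding t_def by simp
    next
      case False then show ?thesis using hdl hdP unfolding t_def by simp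
    qed
    have IHg: "\<forall>\<sigma> q. length \<sigma> \<le> length P \<longrightarrow> claim_hyp (Suc l) q \<sigma> \<longrightarrow> mm q \<le> sum pw (set (butlast \<sigma>))"
    proof (intro allI impI)
      fix \<sigma> q assume "length \<sigma> \<le> length P" "claim_hyp (Suc l) q \<sigma>"
      moreover have "length P < length \<gamma>" unfolding P_def using jlt by simp
      ultimately show "mm q \<le> sum pw (set (butlast \<sigma>))" using less.hyps by simp
    qed
    define I :: "'a \<times> nat \<Rightarrow> bool" where "I = (\<lambda>x. dist (fst p) (fst x) < 2 * r l)"
    obtain ch where ch: "ch \<noteq> []" "\<forall>x\<in>set ch. x \<in> V \<and> snd x = Suc l"
      "successively (\<lambda>x y. x = y \<or> HADJ x y) ch" "hd ch = t"
      "snd (last P) = Suc l \<longrightarrow> last ch = last P"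
      "Suc (Suc l) \<le> snd (last P) \<longrightarrow> dist (fst (last ch)) (fst (last P)) < 4 * r (Suc l)"
      "mm p * Wsum I rs ch \<le> sum pw (set (if hd P = t then tl P else P))"
    proof -
      have sP: "successively ADJ P" unfolding P_def by (rule successively_take[OF g(4)])
      have dP: "distinct P" unfolding P_def using g(2) by simp
      show ?thesis using greedy[OF p IHg le_refl Pne dP PV sP lvP tp mode] that unfolding I_def by blast
    qed
    have lastP: "last P = \<gamma> ! (j - 1)" using Pne j0 jlt unfolding P_def by (subst last_conv_nth) (auto simp: min_def)
    have aze: "ADJ (\<gamma> ! (j - 1)) (\<gamma> ! j)" using successively_nth[OF g(4), of "j - 1"] j0 jlt by simp
    have eV: "l \<le> snd (\<gamma> ! j)" using g(5) jlt by simp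
    have de: "4 * r l \<le> dist (fst p) (fst (\<gamma> ! j))" using Oj unfolding Ok_def by simp
    have lzl: "Suc l \<le> snd (last P)" using lvP Pne by simp
    have "\<not> I (last ch)"
    proof (cases "snd (last P) = Suc l")
      case True
      then have "last ch = last P" using ch(5) by simp
      moreover have "dist (fst (last P)) (fst (\<gamma> ! j)) < 2 * r l"
        using adj_step[OF aze[folded lastP], of l] True eV by simp
      moreover have "dist (fst p) (fst (\<gamma> ! j)) \<le> dist (fst p) (fst (last P)) + dist (fst (last P)) (fst (\<gamma> ! j))"
        by (rule dist_triangle)
      ultimately show ?thesis using de unfolding I_def by auto
    next
      case False
      then have deep: "Suc (Suc l) \<le> snd (last P)" using lzl by simp
      have "dist (fst (last ch)) (fst (last P)) < 4 * r (Suc l)" using ch(6) deep by simp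
      moreover have "dist (fst (last P)) (fst (\<gamma> ! j)) < 2 * r (Suc l)"
      proof -
        have "Suc l \<le> snd (\<gamma> ! j)" using adj_cases(3)[OF aze[folded lastP]] deep by auto
        then show ?thesis using adj_step[OF aze[folded lastP], of "Suc l"] deep by simp
      qed
      moreover have "dist (fst p) (fst (\<gamma> ! j)) \<le> dist (fst p) (fst (last ch)) + dist (fst (last ch)) (fst (last P)) + dist (fst (last P)) (fst (\<gamma> ! j))"
        using dist_triangle[of "fst p" "fst (\<gamma> ! j)" "fst (last ch)"]
          dist_triangle[of "fst (last ch)" "fst (\<gamma> ! j)" "fst (last P)"] by linarith
      moreover have "6 * r (Suc l) \<le> r l" by (rule r_Suc_6)
      ultimately show ?thesis using de r_pos[of l] unfolding I_def by linarith
    qed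
    moreover have "I (hd ch)" using ch(4) dpt r_pos[of l] unfolding I_def by simp
    ultimately obtain h where h: "is_hpath X a lam Xs h" "hd h = hd ch" "set h \<subseteq> set ch" "\<not> I (last h)"
      "L_h X a lam Xs par h \<rho> \<le> Wsum I rs ch"
      using trunc[of ch I] ch by (metis last_in_set)
    have hne: "h \<noteq> []" using h(1) unfolding is_hpath_def by simp
    have "h \<in> Gamma_v X a lam Xs p"
      unfolding Gamma_v_def Bx_def r_def[symmetric]
    proof (intro CollectI conjI)
      show "is_hpath X a lam Xs h" by (rule h(1))
      show "\<forall>w\<in>set h. snd w = Suc (snd p)" using h(3) ch(2) p(2) by auto
      show "fst (hd h) \<in> ball (fst p) (r (snd p)) \<inter> X"
        using h(2) ch(4) dpt p(2) fst_in_X[OF tp(1)] by auto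
      show "fst (last h) \<notin> ball (fst p) (2 * r (snd p)) \<inter> X" using h(4) p(2) unfolding I_def by auto
    qed
    then have L1: "1 \<le> L_h X a lam Xs par h \<rho>" using H3'' p(1) unfolding H3'_def by auto
    have "mm p \<le> mm p * L_h X a lam Xs par h \<rho>" using L1 mmp by (simp add: mult_le_cancel_left1)
    also have "\<dots> \<le> mm p * Wsum I rs ch" using h(5) mmp by (intro mult_left_mono) auto
    also have "\<dots> \<le> sum pw (set (if hd P = t then tl P else P))" by (rule ch(7))
    also have "\<dots> \<le> sum pw (set P)"
    proof -
      have "set (tl P) \<subseteq> set P" using Pne by (cases P) auto
      then show ?thesis using PV by (intro sum_pw_mono) auto
    qed
    also have "\<dots> \<le> sum pw (set (butlast \<gamma>))" using Psub fin by (intro sum_pw_mono) auto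
    finally show ?thesis .
  qed
qed


lemma near_K0: assumes "c \<in> V" "w \<in> V" "snd w = snd c" "dist (fst c) (fst w) < lam * r (snd c)"
  shows "pw c \<le> K0 * pw w"
proof (cases "c = w")
  case True
  then show ?thesis using pw_pos[OF assms(2)] K0_ge by simp
next
  case False
  have "dist (fst c) (fst c) < lam * r (snd c)" using lam_ge r_pos[of "snd c"] by simp
  moreover have "dist (fst w) (fst c) < lam * r (snd c)" using assms(4) by (simp add: dist_commute)
  ultimately have "HADJ c w" using hadj_intro[OF assms(1,2) _ False fst_in_X[OF assms(1)]] assms(3) by auto
  then show ?thesis by (rule K0)
qed


lemma tri: "dist u w \<le> dist u v + dist v w" by (rule dist_triangle)

lemma H3_holds: assumes diam: "diameter X = 1/2" shows "H3 X a lam Xs par \<rho>"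
  unfolding H3_def
proof (intro exI[of _ "K0 / eta_m^2"] conjI ballI impI)
  have e2: "0 < eta_m^2" "eta_m^2 \<le> 1" using eta_pos eta_lt by (auto simp: power_le_one)
  show "1 \<le> K0 / eta_m^2" using K0_ge e2 by (simp add: le_divide_eq)
  fix x y assume x: "x \<in> X" and y: "y \<in> X" and xy: "x \<noteq> y"
  define PP where "PP n = (\<exists>z\<in>Xs n. x \<in> ball z (2 * r n) \<and> y \<in> ball z (2 * r n))" for n
  have nt: "ntilde a Xs x y = Greatest PP" unfolding ntilde_def PP_def r_def by simp
  have bX: "bounded X" using cpt compact_imp_bounded by blast
  have PP0: "PP 0"
  proof -
    have "dist x0 x \<le> 1/2" "dist x0 y \<le> 1/2"
      using diameter_bounded_bound[OF bX hf_parts(1)] x y diam by auto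
    then show ?thesis unfolding PP_def using hf_parts(2) r_0 by auto
  qed
  have dxy: "dist x y > 0" using xy by simp
  obtain b where b: "4 / dist x y < a ^ b" using real_arch_pow[of a "4 / dist x y"] a_ge6 by auto
  have PPb: "n \<le> b" if Hn: "PP n" for n
  proof (rule ccontr)
    assume "\<not> n \<le> b"
    then have "r n \<le> r b" by (intro r_mono) auto
    moreover have "r b = 1 / a ^ b" unfolding r_def using a_ge6 by (simp add: powr_minus powr_realpow divide_inverse)
    ultimately have "4 * r n \<le> 4 / a ^ b" by simp
    moreover have "4 / a ^ b < dist x y" using b dxy a_ge6
      by (simp add: field_simps)
    moreover obtain z where "dist z x < 2 * r n" "dist z y < 2 * r n" using Hn unfolding PP_def by auto
    moreover have "dist x y \<le> dist z x + dist z y" by (rule dist_triangle3)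
    ultimately show False by linarith
  qed
  define nn where "nn = Greatest PP"
  have PPn: "PP nn" unfolding nn_def using GreatestI_nat[of PP 0 b, OF PP0 PPb] by blast
  have nS: "\<not> PP (Suc nn)" using Greatest_le_nat[of PP "Suc nn" b] PPb unfolding nn_def by auto
  have dxy_ge: "r (Suc nn) \<le> dist x y"
  proof (rule ccontr)
    assume c: "\<not> ?thesis"
    obtain z where z: "z \<in> Xs (Suc nn)" "dist x z < r (Suc nn)" using net[OF x] by blast
    have "dist z y \<le> dist z x + dist x y" by (rule dist_triangle)
    moreover have "dist z x < r (Suc nn)" using z(2) by (simp add: dist_commute)
    ultimately have "dist z x < 2 * r (Suc nn)" "dist z y < 2 * r (Suc nn)" using c r_pos[of "Suc nn"] by linarith+
    then have "PP (Suc nn)" unfolding PP_def using z(1) by auto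
    then show False using nS by simp
  qed
  have cx: "cxy X a Xs x y = {(z, nn) | z. z \<in> Xs nn \<and> {x, y} \<subseteq> Bx X z (2 * r nn)}"
    unfolding cxy_def Let_def nt r_def nn_def by simp
  have cfin: "finite (cxy X a Xs x y)"
  proof -
    have "cxy X a Xs x y \<subseteq> (\<lambda>z. (z, nn)) ` Xs nn" unfolding cx by auto
    then show ?thesis using finite_Xs finite_subset by blast
  qed
  have cne: "cxy X a Xs x y \<noteq> {}" using PPn x y unfolding cx PP_def Bx_def by auto
  obtain c where cin: "c \<in> cxy X a Xs x y" and pic: "pi_c X a Xs par \<rho> x y = pw c"
  proof -
    have "Max (pw ` cxy X a Xs x y) \<in> pw ` cxy X a Xs x y" using cfin cne by (intro Max_in) auto
    then show ?thesis using that unfolding pi_c_def by auto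
  qed
  obtain zc where zc: "c = (zc, nn)" "zc \<in> Xs nn" "dist zc x < 2 * r nn" "dist zc y < 2 * r nn"
    using cin unfolding cx Bx_def by auto
  have cV: "c \<in> V" "snd c = nn" "fst c = zc" using zc verts_iff by auto
  define K1 where "K1 = K0 / eta_m^2"
  have fin_goal: "pi_c X a Xs par \<rho> x y / (K0 / eta_m^2) \<le> W"
    if "pi_c X a Xs par \<rho> x y \<le> K0 * U" "U * eta_m^2 \<le> W" "U \<ge> 0" for U W
  proof -
    have "pi_c X a Xs par \<rho> x y / (K0 / eta_m^2) = pi_c X a Xs par \<rho> x y * eta_m^2 / K0"
      using K0_ge e2 by (simp add: field_simps)
    also have "\<dots> \<le> K0 * U * eta_m^2 / K0" using that(1) e2 K0_ge
      by (intro divide_right_mono mult_right_mono) auto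
    also have "\<dots> = U * eta_m^2" using K0_ge by simp
    finally show ?thesis using that(2) by linarith
  qed
  show "\<exists>n0. \<forall>n\<ge>n0. \<forall>\<gamma>\<in>Gamma_xy X a lam Xs par n x y.
          pi_c X a Xs par \<rho> x y / (K0 / eta_m^2) \<le> L_rho par \<rho> \<gamma>"
  proof (intro exI[of _ "nn + 3"] allI impI ballI)
    fix n \<gamma> assume n: "nn + 3 \<le> n" and g: "\<gamma> \<in> Gamma_xy X a lam Xs par n x y"
    have gp: "\<gamma> \<noteq> []" "set \<gamma> \<subseteq> V" "successively ADJ \<gamma>" "snd (hd \<gamma>) = n" "snd (last \<gamma>) = n"
      "dist (fst (hd \<gamma>)) x < r n" "dist (fst (last \<gamma>)) y < r n"
      using g unfolding Gamma_xy_def is_path_def Bx_def r_def[symmetric] by auto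
    obtain \<gamma>0 where g0: "\<gamma>0 \<noteq> []" "distinct \<gamma>0" "successively ADJ \<gamma>0" "hd \<gamma>0 = hd \<gamma>"
      "last \<gamma>0 = last \<gamma>" "set \<gamma>0 \<subseteq> set \<gamma>"
      using loop_free[OF gp(1,3)] by blast
    have g0V: "set \<gamma>0 \<subseteq> V" using g0(6) gp(2) by auto
    have Lge: "sum pw (set \<gamma>0) \<le> L_rho par \<rho> \<gamma>"
      unfolding L_rho_def using g0(6) gp(2) by (intro sum_pw_mono) auto
    define l where "l = Suc (Suc nn)"
    define h0 where "h0 = hd \<gamma>0"
    have h0: "h0 \<in> V" "snd h0 = n" "dist x (fst h0) < r n" using g0 gp g0V unfolding h0_def
      by (auto simp: dist_commute)
    have nl: "l \<le> n" "Suc l \<le> n" using n unfolding l_def by auto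
    have nl': "l \<le> snd h0" using nl h0 by simp
    define p where "p = anc l h0"
    have pp: "p \<in> V" "snd p = l" "dist (fst h0) (fst p) < 6/5 * r l"
      using anc_props[OF h0(1) nl'] unfolding p_def by auto
    have rf: "r n \<le> r (Suc l)" "6 * r (Suc l) \<le> r l" "6 * r l \<le> r (Suc nn)" "6 * r (Suc nn) \<le> r nn"
      "r n \<le> r l" "0 < r l" "0 < r nn" "6 * r nn \<le> lam * r nn"
      using r_mono[OF nl(2)] r_Suc_6 r_mono[OF nl(1)] r_pos lam_ge unfolding l_def by auto
    define Ok where "Ok = (\<lambda>j. j < length \<gamma>0 \<and> (snd (\<gamma>0 ! j) < l \<or> 4 * r l \<le> dist (fst p) (fst (\<gamma>0 ! j))))"
    have "Ok (length \<gamma>0 - 1)"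
    proof -
      have lst: "\<gamma>0 ! (length \<gamma>0 - 1) = last \<gamma>0" using g0(1) by (simp add: last_conv_nth)
      have "dist x y \<le> dist x (fst h0) + dist (fst h0) (fst p) + dist (fst p) (fst (last \<gamma>0)) + dist (fst (last \<gamma>0)) y"
        using tri[of x y "fst h0"] tri[of "fst h0" y "fst p"] tri[of "fst p" y "fst (last \<gamma>0)"] by linarith
      moreover have "dist (fst (last \<gamma>0)) y < r n" using gp(7) g0(5) by simp
      ultimately have "4 * r l \<le> dist (fst p) (fst (last \<gamma>0))"
        using dxy_ge h0(3) pp(3) rf by linarith
      then show ?thesis unfolding Ok_def using lst g0(1) by simp
    qed
    define j where "j = (LEAST j. Ok j)"
    have Oj: "Ok j" unfolding j_def using \<open>Ok (length \<gamma>0 - 1)\<close> by (rule LeastI)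
    have Oi: "\<And>i. i < j \<Longrightarrow> \<not> Ok i" unfolding j_def by (rule not_less_Least)
    have jlt: "j < length \<gamma>0" using Oj unfolding Ok_def by simp
    have g0nth: "\<And>i. i < length \<gamma>0 \<Longrightarrow> \<gamma>0 ! i \<in> V" using g0V by auto
    show "pi_c X a Xs par \<rho> x y / (K0 / eta_m^2) \<le> L_rho par \<rho> \<gamma>"
    proof (cases "snd (\<gamma>0 ! j) < l")
      case True
      have j0: "j \<noteq> 0"
      proof
        assume "j = 0"
        then have "\<gamma>0 ! j = h0" unfolding h0_def using g0(1) by (simp add: hd_conv_nth)
        then show False using True h0(2) nl by simp
      qed
      define u where "u = \<gamma>0 ! (j - 1)"
      define v where "v = \<gamma>0 ! j"
      have nOk: "\<not> Ok (j - 1)" using Oi j0 by simp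
      have u: "l \<le> snd u" "dist (fst p) (fst u) < 4 * r l" using nOk jlt unfolding Ok_def u_def by auto
      have auv: "ADJ u v" using successively_nth[OF g0(3), of "j - 1"] j0 jlt unfolding u_def v_def by simp
      have uV: "u \<in> V" "v \<in> V" using adj_cases(1,2)[OF auv] by auto
      have vpar: "v = par u" "snd u = Suc (snd v)" using adj_cases(3)[OF auv] u(1) True unfolding v_def by auto
      have sv: "snd v = Suc nn" "snd u = l" using vpar(2) u(1) True unfolding v_def l_def by auto
      have duv: "dist (fst u) (fst v) < r (Suc nn)" using par_props(3)[OF uV(1)] vpar sv unfolding l_def by simp
      define w where "w = par v"
      have wp: "w \<in> V" "snd w = nn" "dist (fst v) (fst w) < r nn"
        using par_props[OF uV(2)] sv unfolding w_def by auto
      have pwv: "pw v = pw w * \<rho> v" using pw_step[OF uV(2)] sv unfolding w_def by simp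
      have dzw: "dist zc (fst w) \<le> dist zc x + dist x (fst h0) + dist (fst h0) (fst p) + dist (fst p) (fst u)
          + dist (fst u) (fst v) + dist (fst v) (fst w)"
        using tri[of zc "fst w" x] tri[of x "fst w" "fst h0"] tri[of "fst h0" "fst w" "fst p"]
          tri[of "fst p" "fst w" "fst u"] tri[of "fst u" "fst w" "fst v"] by linarith
      have "dist zc (fst w) < 6 * r nn"
        using dzw zc(3) h0(3) pp(3) u(2) duv wp(3) rf by linarith
      then have "dist (fst c) (fst w) < lam * r (snd c)" using rf(8) cV by simp
      then have K: "pw c \<le> K0 * pw w" using near_K0[OF cV(1) wp(1)] wp(2) cV(2) by simp
      have "pw w * eta_m^2 \<le> pw v"
      proof -
        have "eta_m^2 \<le> eta_m" using eta_pos eta_lt by (simp add: power2_eq_square)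
        also have "\<dots> \<le> \<rho> v" using eta_le uV(2) by auto
        finally show ?thesis using pwv pw_pos[OF wp(1)] by (simp add: mult_left_mono)
      qed
      also have "pw v \<le> sum pw (set \<gamma>0)"
        using jlt g0V unfolding v_def by (intro member_le_sum) (auto intro: less_imp_le pw_pos)
      finally show ?thesis using fin_goal[of "pw w" "L_rho par \<rho> \<gamma>"] K pic Lge pw_pos[OF wp(1)] by simp
    next
      case False
      then have outj: "4 * r l \<le> dist (fst p) (fst (\<gamma>0 ! j))" using Oj unfolding Ok_def by simp
      define \<sigma> where "\<sigma> = take (Suc j) \<gamma>0"
      have "claim_hyp l p \<sigma>" unfolding claim_hyp_def
      proof (intro conjI)
        show "p \<in> V" "snd p = l" by (rule pp(1), rule pp(2))
        show "\<sigma> \<noteq> []" unfolding \<sigma>_def using g0(1) by simp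
        show "distinct \<sigma>" unfolding \<sigma>_def using g0(2) by simp
        show "set \<sigma> \<subseteq> V" unfolding \<sigma>_def using g0V set_take_subset by fastforce
        show "successively ADJ \<sigma>" unfolding \<sigma>_def by (rule successively_take[OF g0(3)])
        show "\<forall>w\<in>set \<sigma>. l \<le> snd w"
        proof
          fix w assume "w \<in> set \<sigma>"
          then obtain i where i: "i < length \<sigma>" "w = \<sigma> ! i" by (auto simp: in_set_conv_nth)
          then have ij: "i \<le> j" "w = \<gamma>0 ! i" unfolding \<sigma>_def by auto
          show "l \<le> snd w"
          proof (cases "i = j")
            case True then show ?thesis using False ij by simp
          next
            case False then show ?thesis using Oi[of i] ij jlt unfolding Ok_def by auto
          qed
        qed
        show "anc l (hd \<sigma>) = p" unfolding \<sigma>_def p_def h0_def using g0(1) by simp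
        have "last \<sigma> = \<gamma>0 ! j" unfolding \<sigma>_def using jlt by (simp add: take_Suc_conv_app_nth)
        then show "4 * r l \<le> dist (fst p) (fst (last \<sigma>))" using outj by simp
      qed
      then have "mm p \<le> sum pw (set (butlast \<sigma>))" by (rule claim)
      also have "\<dots> \<le> sum pw (set \<gamma>0)" unfolding \<sigma>_def using g0V
        by (intro sum_pw_mono) (auto dest: in_set_butlastD in_set_takeD)
      finally have mmL: "mm p \<le> sum pw (set \<gamma>0)" .
      obtain q where q: "q \<in> NB p" "mm p = pw q" using mm_attained[OF pp(1)] by blast
      have qV: "q \<in> V" "snd q = l" "q = p \<or> HADJ p q" using NB_D[OF q(1)] pp by auto
      have dpq: "dist (fst p) (fst q) < 2 * r (Suc nn)"
      proof (cases "q = p")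
        case True then show ?thesis using r_pos[of "Suc nn"] by simp
      next
        case False
        then have "dist (fst p) (fst q) < 2 * lam * r l" using qV(3) hadj_dist pp(2) by fastforce
        then show ?thesis using r_Suc_lam[of "Suc nn"] unfolding l_def by simp
      qed
      define q1 where "q1 = par q"
      have q1: "q1 \<in> V" "snd q1 = Suc nn" "dist (fst q) (fst q1) < r (Suc nn)"
        using par_props[OF qV(1)] qV(2) unfolding q1_def l_def by auto
      define q2 where "q2 = par q1"
      have q2: "q2 \<in> V" "snd q2 = nn" "dist (fst q1) (fst q2) < r nn"
        using par_props[OF q1(1)] q1(2) unfolding q2_def by auto
      have pwq: "pw q = pw q2 * \<rho> q1 * \<rho> q"
        using pw_step[OF qV(1)] pw_step[OF q1(1)] qV(2) q1(2) unfolding q1_def q2_def l_def by simp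
      have dzw: "dist zc (fst q2) \<le> dist zc x + dist x (fst h0) + dist (fst h0) (fst p) + dist (fst p) (fst q)
          + dist (fst q) (fst q1) + dist (fst q1) (fst q2)"
        using tri[of zc "fst q2" x] tri[of x "fst q2" "fst h0"] tri[of "fst h0" "fst q2" "fst p"]
          tri[of "fst p" "fst q2" "fst q"] tri[of "fst q" "fst q2" "fst q1"] by linarith
      have "dist zc (fst q2) < 6 * r nn"
        using dzw zc(3) h0(3) pp(3) dpq q1(3) q2(3) rf by linarith
      then have "dist (fst c) (fst q2) < lam * r (snd c)" using rf(8) cV by simp
      then have K: "pw c \<le> K0 * pw q2" using near_K0[OF cV(1) q2(1)] q2(2) cV(2) by simp
      have "pw q2 * eta_m^2 \<le> pw q"
      proof -
        have "eta_m \<le> \<rho> q1" "eta_m \<le> \<rho> q" using eta_le q1(1) qV(1) by auto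
        then have "eta_m * eta_m \<le> \<rho> q1 * \<rho> q" using eta_pos by (intro mult_mono) auto
        then have "pw q2 * (eta_m * eta_m) \<le> pw q2 * (\<rho> q1 * \<rho> q)"
          using pw_pos[OF q2(1)] by (intro mult_left_mono) auto
        then show ?thesis using pwq by (simp add: power2_eq_square mult.assoc)
      qed
      also have "\<dots> \<le> sum pw (set \<gamma>0)" using q(2) mmL by simp
      finally show ?thesis using fin_goal[of "pw q2" "L_rho par \<rho> \<gamma>"] K pic Lge pw_pos[OF q2(1)] by simp
    qed
  qed
qed

end

theorem proposition3p17:
  fixes X :: "'a::metric_space set" and a lam :: real and x0 :: 'a
    and Xs :: "nat \<Rightarrow> 'a set" and par :: "'a \<times> nat \<Rightarrow> 'a \<times> nat"
    and \<rho> :: "'a \<times> nat \<Rightarrow> real"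
  assumes "compact X" and "doubling X" and "diameter X = 1/2"
    and "a \<ge> lam" and "lam \<ge> 6"
    and "hyperbolic_filling X a x0 Xs par"
    and "\<forall>v\<in>verts Xs. \<rho> v > 0"
    and "H1 Xs \<rho>" and "H2 X a lam Xs par \<rho>" and "H3' X a lam Xs par \<rho>"
  shows "H3 X a lam Xs par \<rho>"
proof -
  obtain eta_m eta_p where e: "0 < eta_m" "eta_m \<le> eta_p" "eta_p < 1"
    "\<forall>v\<in>verts Xs. eta_m \<le> \<rho> v \<and> \<rho> v \<le> eta_p"
    using assms(8) unfolding H1_def by blast
  obtain K0 where k: "K0 \<ge> 1" "\<forall>v w. hadj X a lam Xs v w \<longrightarrow> piw par \<rho> v \<le> K0 * piw par \<rho> w"
    using assms(9) unfolding H2_def by blast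
  interpret HF X a lam x0 Xs par \<rho> eta_m K0
  proof
    show "compact X" "lam \<le> a" "6 \<le> lam" "hyperbolic_filling X a x0 Xs par"
      "\<forall>v\<in>verts Xs. 0 < \<rho> v" "H3' X a lam Xs par \<rho>"
      using assms by auto
    show "0 < eta_m" "eta_m < 1" "\<forall>v\<in>verts Xs. eta_m \<le> \<rho> v" "1 \<le> K0" using e k by auto
    show "\<And>v w. hadj X a lam Xs v w \<Longrightarrow> piw par \<rho> v \<le> K0 * piw par \<rho> w" using k by auto
  qed
  show ?thesis using H3_holds assms(3) by blast
qed

end
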